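(* Let $s\in(0,1)$, $\Omega\subset\mathbb{R}^d$ open and bounded, and let $\mu$ be a measure on $S^{d-1}$ having a density with respect to the surface measure $\sigma$ on $S^{d-1}$ that is bounded from below and from above by positive constants. Then $L^1(\mathbb{R}^d,\nu^\star(x)\,dx)=L^1(\mathbb{R}^d,(1+|x|)^{-d-2s}\,dx)$.
   Context: $\nu^\star(x)=\int_{\mathbb{R}}\int_{S^{d-1}}\mathbf{1}_\Omega(x+r\theta)(1+|r|)^{-1-2s}\,\mu(d\theta)\,dr$. *)

theory Defs
  imports "HOL-Analysis.Analysis"
begin

text \<open>Surface measure on the unit sphere S^{d-1} of a Euclidean space of dimension
  d = DIM('a), defined via the cone construction:
  sigma(A) = d * lambda({x. 0 < norm x < 1, x / norm x in A}).\<close>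
definition sphere_surface_measure :: "'a::euclidean_space measure" where
  "sphere_surface_measure =
     scale_measure (of_nat DIM('a))
       (distr (restrict_space lborel (ball 0 1 - {0}))
              (restrict_space borel (sphere 0 1))
              (\<lambda>x. (1 / norm x) *\<^sub>R x))"

definition nu_star :: "'a::euclidean_space set \<Rightarrow> real \<Rightarrow> 'a measure \<Rightarrow> 'a \<Rightarrow> ennreal" where
  "nu_star \<Omega> s M x =
     nn_integral (lborel :: real measure) (\<lambda>r.
        nn_integral M (\<lambda>\<theta>. indicator \<Omega> (x + r *\<^sub>R \<theta>) * ennreal ((1 + \<bar>r\<bar>) powr (- 1 - 2 * s))))"

end

theory Submission
  imports Defs "HOL-Analysis.Analysis"
begin

lemma space_ssm: "space (sphere_surface_measure :: 'a::euclidean_space measure) = sphere 0 1"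
  unfolding sphere_surface_measure_def by (simp add: space_scale_measure space_restrict_space)

lemma sets_ssm: "sets (sphere_surface_measure :: 'a::euclidean_space measure) = sets (restrict_space borel (sphere 0 1))"
  unfolding sphere_surface_measure_def by simp

lemma ssm_nn_integral:
  fixes h :: "'a::euclidean_space \<Rightarrow> ennreal"
  assumes [measurable]: "h \<in> borel_measurable borel"
  shows "(\<integral>\<^sup>+\<theta>. h \<theta> \<partial>sphere_surface_measure) =
     of_nat DIM('a) * (\<integral>\<^sup>+y. indicator (ball 0 1 - {0}) y * h ((1 / norm y) *\<^sub>R y) \<partial>lborel)"
proof -
  have m: "(\<lambda>x::'a. (1 / norm x) *\<^sub>R x) \<in> restrict_space lborel (ball 0 1 - {0}) \<rightarrow>\<^sub>M restrict_space borel (sphere 0 1)"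
    by (rule measurable_restrict_space3) (auto intro: measurable_restrict_space1)
  have hm: "h \<in> borel_measurable (restrict_space borel (sphere 0 1))"
    by (rule measurable_restrict_space1) simp
  show ?thesis
    unfolding sphere_surface_measure_def
    apply (subst nn_integral_scale_measure)
     apply (simp add: m hm measurable_distr_eq1)
    apply (subst nn_integral_distr)
      apply (rule m)
     apply (simp add: hm)
    apply (subst nn_integral_restrict_space)
     apply simp
    apply (simp add: mult.commute)
    done
qed

lemma half_line_nn:
  fixes a e :: real
  assumes "e < -1" "a > 0"
  shows "(\<integral>\<^sup>+t. ennreal (if a < t then t powr e else 0) \<partial>lborel) = ennreal (- (a powr (e+1)) / (e+1))"
proof -
  have h1: "((\<lambda>x. x powr e) has_integral -(a powr (e+1)) / (e+1)) {a..}"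
    by (rule has_integral_powr_to_inf[OF assms])
  have h2: "((\<lambda>x. x powr e) has_integral -(a powr (e+1)) / (e+1)) {a<..}"
    using h1 by (subst has_integral_spike_set_eq[where T="{a..}"]) (auto intro: negligible_subset[of "{a}"])
  have h3: "((\<lambda>x. if a < x then x powr e else 0) has_integral -(a powr (e+1)) / (e+1)) UNIV"
    using h2 has_integral_restrict_UNIV[of "{a<..}" "\<lambda>x. x powr e"] by simp
  show ?thesis
    by (rule nn_integral_has_integral_lborel[OF _ _ h3]) auto
qed

lemma two_sided_nn:
  fixes a e :: real
  assumes "e < -1" "a > 0"
  shows "(\<integral>\<^sup>+t. ennreal (if a < \<bar>t\<bar> then \<bar>t\<bar> powr e else 0) \<partial>lborel) = ennreal (2 * (- (a powr (e+1)) / (e+1)))"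
proof -
  let ?f = "\<lambda>t::real. ennreal (if a < t then t powr e else 0)"
  have eq: "\<And>t. ennreal (if a < \<bar>t\<bar> then \<bar>t\<bar> powr e else 0) = ?f t + ?f (-t)"
    using assms by auto
  have r: "(\<integral>\<^sup>+t. ?f (-t) \<partial>lborel) = (\<integral>\<^sup>+t. ?f t \<partial>lborel)"
    using nn_integral_real_affine[of ?f "-1" 0] by (simp only: add_0 mult_minus1 abs_minus_cancel abs_one ennreal_1 mult_1) (auto intro: sym)
  have pos: "0 \<le> - (a powr (e+1)) / (e+1)" using assms by (simp add: divide_nonneg_neg)
  show ?thesis
    apply (simp only: eq)
    apply (subst nn_integral_add)
      apply simp_all
    using r half_line_nn[OF assms] pos by (simp add: ennreal_plus[symmetric] del: ennreal_plus)
qed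

lemma nn_integral_affine_eucl:
  fixes f :: "'a::euclidean_space \<Rightarrow> ennreal"
  assumes [measurable]: "f \<in> borel_measurable borel" and c: "c \<noteq> 0"
  shows "(\<integral>\<^sup>+x. f x \<partial>lborel) = ennreal (\<bar>c\<bar> ^ DIM('a)) * (\<integral>\<^sup>+x. f (t + c *\<^sub>R x) \<partial>lborel)"
  by (subst lborel_affine[OF c, of t])
     (simp add: nn_integral_density nn_integral_distr nn_integral_cmult)

lemma Phi_formula:
  fixes x :: "'a::euclidean_space" and W :: "real \<Rightarrow> real" and \<Omega> :: "'a set"
  assumes Wm[measurable]: "W \<in> borel_measurable borel" and W0: "\<And>r. 0 \<le> W r"
    and Om[measurable]: "\<Omega> \<in> sets borel"
  shows "(\<integral>\<^sup>+r. \<integral>\<^sup>+\<theta>. indicator \<Omega> (x + r *\<^sub>R \<theta>) * ennreal (W \<bar>r\<bar>) \<partial>sphere_surface_measure \<partial>lborel)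
    = (\<integral>\<^sup>+z. ennreal (indicator \<Omega> z * (if z = x then 0 else 2 * norm (z - x) powr (1 - real DIM('a)) * W (norm (z - x)))) \<partial>lborel)"
proof -
  define d where "d = DIM('a)"
  define B0 where "B0 = ball (0::'a) 1 - {0}"
  have B0m[measurable]: "B0 \<in> sets borel" unfolding B0_def by simp
  define F1 where "F1 = (\<lambda>(r::real) (y::'a). indicator B0 y * indicator \<Omega> (x + (r / norm y) *\<^sub>R y) * W \<bar>r\<bar>)"
  define F2 where "F2 = (\<lambda>(t::real) (y::'a). indicator B0 y * norm y * indicator \<Omega> (x + t *\<^sub>R y) * W (norm y * \<bar>t\<bar>))"
  define F3 where "F3 = (\<lambda>(t::real) (z::'a). indicator \<Omega> z * (if z \<noteq> x \<and> norm (z - x) < \<bar>t\<bar> then norm (z - x) * W (norm (z - x)) * \<bar>t\<bar> powr (- real d - 1) else 0))"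
  have F1m[measurable]: "case_prod F1 \<in> borel_measurable (lborel \<Otimes>\<^sub>M lborel)"
    unfolding F1_def by measurable
  have F2m[measurable]: "case_prod F2 \<in> borel_measurable (lborel \<Otimes>\<^sub>M lborel)"
    unfolding F2_def by measurable
  have F3m[measurable]: "case_prod F3 \<in> borel_measurable (lborel \<Otimes>\<^sub>M lborel)"
    unfolding F3_def by measurable
  have PP: "pair_sigma_finite (lborel :: real measure) (lborel :: 'a measure)"
    by (simp add: pair_sigma_finite_def lborel.sigma_finite_measure_axioms)
  have s1: "(\<integral>\<^sup>+r. \<integral>\<^sup>+\<theta>. indicator \<Omega> (x + r *\<^sub>R \<theta>) * ennreal (W \<bar>r\<bar>) \<partial>sphere_surface_measure \<partial>lborel)
     = (\<integral>\<^sup>+r. of_nat d * (\<integral>\<^sup>+y. ennreal (F1 r y) \<partial>lborel) \<partial>lborel)"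
  proof (rule nn_integral_cong)
    fix r :: real
    have "(\<integral>\<^sup>+\<theta>. indicator \<Omega> (x + r *\<^sub>R \<theta>) * ennreal (W \<bar>r\<bar>) \<partial>sphere_surface_measure)
      = of_nat d * (\<integral>\<^sup>+y. indicator B0 y * (indicator \<Omega> (x + r *\<^sub>R ((1 / norm y) *\<^sub>R y)) * ennreal (W \<bar>r\<bar>)) \<partial>lborel)"
      unfolding d_def B0_def by (rule ssm_nn_integral) measurable
    also have "(\<integral>\<^sup>+y. indicator B0 y * (indicator \<Omega> (x + r *\<^sub>R ((1 / norm y) *\<^sub>R y)) * ennreal (W \<bar>r\<bar>)) \<partial>lborel)
      = (\<integral>\<^sup>+y. ennreal (F1 r y) \<partial>lborel)"
      by (rule nn_integral_cong) (simp add: F1_def W0 ennreal_mult indicator_def)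
    finally show "(\<integral>\<^sup>+\<theta>. indicator \<Omega> (x + r *\<^sub>R \<theta>) * ennreal (W \<bar>r\<bar>) \<partial>sphere_surface_measure)
      = of_nat d * (\<integral>\<^sup>+y. ennreal (F1 r y) \<partial>lborel)" .
  qed
  also have "\<dots> = of_nat d * (\<integral>\<^sup>+r. \<integral>\<^sup>+y. ennreal (F1 r y) \<partial>lborel \<partial>lborel)"
    by (rule nn_integral_cmult) measurable
  also have "(\<integral>\<^sup>+r. \<integral>\<^sup>+y. ennreal (F1 r y) \<partial>lborel \<partial>lborel) = (\<integral>\<^sup>+y. \<integral>\<^sup>+r. ennreal (F1 r y) \<partial>lborel \<partial>lborel)"
    by (rule sym, rule pair_sigma_finite.Fubini'[OF PP]) measurable
  also have "\<dots> = (\<integral>\<^sup>+y. \<integral>\<^sup>+t. ennreal (F2 t y) \<partial>lborel \<partial>lborel)"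
  proof (rule nn_integral_cong)
    fix y :: 'a
    show "(\<integral>\<^sup>+r. ennreal (F1 r y) \<partial>lborel) = (\<integral>\<^sup>+t. ennreal (F2 t y) \<partial>lborel)"
    proof (cases "y \<in> B0")
      case False
      then show ?thesis by (simp add: F1_def F2_def)
    next
      case True
      then have n: "norm y > 0" by (simp add: B0_def)
      have "(\<integral>\<^sup>+r. ennreal (F1 r y) \<partial>lborel) = ennreal \<bar>norm y\<bar> * (\<integral>\<^sup>+t. ennreal (F1 (0 + norm y * t) y) \<partial>lborel)"
        by (rule nn_integral_real_affine) (use n in \<open>auto simp: F1_def\<close>)
      also have "\<dots> = (\<integral>\<^sup>+t. ennreal \<bar>norm y\<bar> * ennreal (F1 (0 + norm y * t) y) \<partial>lborel)"
        by (rule nn_integral_cmult[symmetric]) (simp add: F1_def)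
      also have "\<dots> = (\<integral>\<^sup>+t. ennreal (F2 t y) \<partial>lborel)"
      proof (rule nn_integral_cong)
        fix t :: real
        have "norm y * \<bar>t\<bar> = \<bar>norm y * t\<bar>" by (simp add: abs_mult)
        then show "ennreal \<bar>norm y\<bar> * ennreal (F1 (0 + norm y * t) y) = ennreal (F2 t y)"
          using n by (simp add: F1_def F2_def ennreal_mult[symmetric] W0 mult_ac)
      qed
      finally show ?thesis .
    qed
  qed
  also have "\<dots> = (\<integral>\<^sup>+t. \<integral>\<^sup>+y. ennreal (F2 t y) \<partial>lborel \<partial>lborel)"
    by (rule pair_sigma_finite.Fubini'[OF PP]) measurable
  also have "\<dots> = (\<integral>\<^sup>+t. \<integral>\<^sup>+z. ennreal (F3 t z) \<partial>lborel \<partial>lborel)"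
  proof (rule nn_integral_cong_AE)
    have "AE t in lborel. (t::real) \<noteq> 0" by (rule AE_lborel_singleton)
    then show "AE t in lborel. (\<integral>\<^sup>+y. ennreal (F2 t y) \<partial>lborel) = (\<integral>\<^sup>+z. ennreal (F3 t z) \<partial>lborel)"
    proof (rule AE_mp, intro AE_I2 impI)
      fix t :: real assume t: "t \<noteq> 0"
      have pw: "\<bar>1 / t\<bar> ^ d * (1 / \<bar>t\<bar>) = \<bar>t\<bar> powr (- real d - 1)"
      proof -
        have "\<bar>t\<bar> powr (- real d - 1) = inverse (\<bar>t\<bar> powr (real (d + 1)))"
        proof -
          have "- real d - 1 = - real (d + 1)" by simp
          then show ?thesis using t by (simp only: powr_minus)
        qed
        also have "\<dots> = inverse (\<bar>t\<bar> ^ (d + 1))" using t by (subst powr_realpow) auto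
        finally show ?thesis by (simp add: power_one_over field_simps)
      qed
      have "(\<integral>\<^sup>+y. ennreal (F2 t y) \<partial>lborel) = ennreal (\<bar>1 / t\<bar> ^ DIM('a)) * (\<integral>\<^sup>+z. ennreal (F2 t (- (1 / t) *\<^sub>R x + (1 / t) *\<^sub>R z)) \<partial>lborel)"
        by (rule nn_integral_affine_eucl) (use t in \<open>auto simp: F2_def\<close>)
      also have "\<dots> = (\<integral>\<^sup>+z. ennreal (\<bar>1 / t\<bar> ^ DIM('a)) * ennreal (F2 t (- (1 / t) *\<^sub>R x + (1 / t) *\<^sub>R z)) \<partial>lborel)"
        by (rule nn_integral_cmult[symmetric]) (simp add: F2_def)
      also have "\<dots> = (\<integral>\<^sup>+z. ennreal (F3 t z) \<partial>lborel)"
      proof (rule nn_integral_cong)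
        fix z :: 'a
        have e1: "- (1 / t) *\<^sub>R x + (1 / t) *\<^sub>R z = (1 / t) *\<^sub>R (z - x)" by (simp add: algebra_simps)
        have e2: "x + t *\<^sub>R ((1 / t) *\<^sub>R (z - x)) = z" using t by simp
        have e3: "norm ((1 / t) *\<^sub>R (z - x)) = norm (z - x) / \<bar>t\<bar>" by simp
        have e4: "norm (z - x) / \<bar>t\<bar> * \<bar>t\<bar> = norm (z - x)" using t by simp
        have e5: "(1 / t) *\<^sub>R (z - x) \<in> B0 \<longleftrightarrow> z \<noteq> x \<and> norm (z - x) < \<bar>t\<bar>"
          using t by (auto simp: B0_def divide_less_eq)
        show "ennreal (\<bar>1 / t\<bar> ^ DIM('a)) * ennreal (F2 t (- (1 / t) *\<^sub>R x + (1 / t) *\<^sub>R z)) = ennreal (F3 t z)"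
          unfolding e1 F2_def F3_def using e2 e3 e4 e5 pw[symmetric]
          by (auto simp: ennreal_mult[symmetric] W0 d_def indicator_def power_one_over)
      qed
      finally show "(\<integral>\<^sup>+y. ennreal (F2 t y) \<partial>lborel) = (\<integral>\<^sup>+z. ennreal (F3 t z) \<partial>lborel)" .
    qed
  qed
  also have "\<dots> = (\<integral>\<^sup>+z. \<integral>\<^sup>+t. ennreal (F3 t z) \<partial>lborel \<partial>lborel)"
    by (rule sym, rule pair_sigma_finite.Fubini'[OF PP]) measurable
  also have "of_nat d * \<dots> = (\<integral>\<^sup>+z. of_nat d * (\<integral>\<^sup>+t. ennreal (F3 t z) \<partial>lborel) \<partial>lborel)"
    by (rule nn_integral_cmult[symmetric]) measurable
  also have "\<dots> = (\<integral>\<^sup>+z. ennreal (indicator \<Omega> z * (if z = x then 0 else 2 * norm (z - x) powr (1 - real DIM('a)) * W (norm (z - x)))) \<partial>lborel)"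
  proof (rule nn_integral_cong)
    fix z :: 'a
    show "of_nat d * (\<integral>\<^sup>+t. ennreal (F3 t z) \<partial>lborel) = ennreal (indicator \<Omega> z * (if z = x then 0 else 2 * norm (z - x) powr (1 - real DIM('a)) * W (norm (z - x))))"
    proof (cases "z \<in> \<Omega> \<and> z \<noteq> x")
      case False
      then show ?thesis by (auto simp: F3_def)
    next
      case True
      define a where "a = norm (z - x)"
      have a: "a > 0" using True by (simp add: a_def)
      have dpos: "real d \<ge> 1" unfolding d_def by (simp add: DIM_positive Suc_le_eq)
      have "(\<integral>\<^sup>+t. ennreal (F3 t z) \<partial>lborel) = (\<integral>\<^sup>+t. ennreal (a * W a) * ennreal (if a < \<bar>t\<bar> then \<bar>t\<bar> powr (- real d - 1) else 0) \<partial>lborel)"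
        by (rule nn_integral_cong) (use True a W0 in \<open>auto simp: F3_def a_def ennreal_mult[symmetric]\<close>)
      also have "\<dots> = ennreal (a * W a) * (\<integral>\<^sup>+t. ennreal (if a < \<bar>t\<bar> then \<bar>t\<bar> powr (- real d - 1) else 0) \<partial>lborel)"
        by (rule nn_integral_cmult) simp
      also have "(\<integral>\<^sup>+t. ennreal (if a < \<bar>t\<bar> then \<bar>t\<bar> powr (- real d - 1) else 0) \<partial>lborel)
          = ennreal (2 * (- (a powr (- real d - 1 + 1)) / (- real d - 1 + 1)))"
        by (rule two_sided_nn) (use a dpos in auto)
      also have "ennreal (a * W a) * ennreal (2 * (- (a powr (- real d - 1 + 1)) / (- real d - 1 + 1)))
          = ennreal (a * W a * (2 * (a powr (- real d) / real d)))"
        using a W0 dpos by (subst ennreal_mult[symmetric]) (auto simp: divide_nonneg_pos)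
      finally have I: "(\<integral>\<^sup>+t. ennreal (F3 t z) \<partial>lborel) = ennreal (a * W a * (2 * (a powr (- real d) / real d)))" .
      have aa: "a * a powr (- real d) = a powr (1 - real d)"
        using a by (simp add: powr_diff powr_minus divide_inverse)
      have "of_nat d * ennreal (a * W a * (2 * (a powr (- real d) / real d))) = ennreal (real d * (a * W a * (2 * (a powr (- real d) / real d))))"
        using a W0 by (subst ennreal_of_nat_eq_real_of_nat, subst ennreal_mult[symmetric]) auto
      also have "real d * (a * W a * (2 * (a powr (- real d) / real d))) = 2 * a powr (1 - real d) * W a"
        using dpos aa[symmetric] by (simp add: field_simps)
      finally show ?thesis using True I by (simp add: a_def d_def)
    qed
  qed
  finally show ?thesis .
qed

lemma integrable_density_equiv:
  fixes h1 h2 :: "'a::euclidean_space \<Rightarrow> ennreal" and f :: "'a \<Rightarrow> real"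
  assumes [measurable]: "h1 \<in> borel_measurable borel" "h2 \<in> borel_measurable borel"
    and a: "a > 0" and b: "b < \<infinity>" and lo: "\<And>x. a * h2 x \<le> h1 x" and up: "\<And>x. h1 x \<le> b * h2 x"
  shows "integrable (density lborel h1) f \<longleftrightarrow> integrable (density lborel h2) f"
proof -
  have ms0: "\<And>h::'a \<Rightarrow> ennreal. (borel_measurable (density lborel h) :: ('a \<Rightarrow> real) set) = borel_measurable borel"
    by (intro measurable_cong_sets) simp_all
  have ms: "\<And>h::'a \<Rightarrow> ennreal. f \<in> borel_measurable (density lborel h) \<longleftrightarrow> f \<in> borel_measurable borel"
    by (simp only: ms0)
  show ?thesis
  proof (cases "f \<in> borel_measurable borel")
    case False then show ?thesis by (simp add: integrable_iff_bounded ms)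
  next
    case True
    note [measurable] = True
    have e1: "(\<integral>\<^sup>+x. ennreal (norm (f x)) \<partial>density lborel h1) = (\<integral>\<^sup>+x. h1 x * ennreal (norm (f x)) \<partial>lborel)"
      by (rule nn_integral_density) auto
    have e2: "(\<integral>\<^sup>+x. ennreal (norm (f x)) \<partial>density lborel h2) = (\<integral>\<^sup>+x. h2 x * ennreal (norm (f x)) \<partial>lborel)"
      by (rule nn_integral_density) auto
    have i1: "a * (\<integral>\<^sup>+x. h2 x * ennreal (norm (f x)) \<partial>lborel) \<le> (\<integral>\<^sup>+x. h1 x * ennreal (norm (f x)) \<partial>lborel)"
      apply (subst nn_integral_cmult[symmetric], simp)
      apply (rule nn_integral_mono)
      using lo by (simp add: mult.assoc[symmetric] mult_right_mono)
    have i2: "(\<integral>\<^sup>+x. h1 x * ennreal (norm (f x)) \<partial>lborel) \<le> b * (\<integral>\<^sup>+x. h2 x * ennreal (norm (f x)) \<partial>lborel)"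
      apply (subst nn_integral_cmult[symmetric], simp)
      apply (rule nn_integral_mono)
      using up by (simp add: mult.assoc[symmetric] mult_right_mono)
    show ?thesis
      unfolding integrable_iff_bounded ms e1 e2
    proof (intro iffI conjI; elim conjE)
      assume "(\<integral>\<^sup>+x. h1 x * ennreal (norm (f x)) \<partial>lborel) < \<infinity>"
      then have "a * (\<integral>\<^sup>+x. h2 x * ennreal (norm (f x)) \<partial>lborel) < \<infinity>" using i1 by (metis le_less_trans)
      then show "(\<integral>\<^sup>+x. h2 x * ennreal (norm (f x)) \<partial>lborel) < \<infinity>"
        using a by (auto simp: ennreal_mult_less_top top.not_eq_extremum)
    next
      assume "(\<integral>\<^sup>+x. h2 x * ennreal (norm (f x)) \<partial>lborel) < \<infinity>"
      then have "b * (\<integral>\<^sup>+x. h2 x * ennreal (norm (f x)) \<partial>lborel) < \<infinity>" using b by (simp add: ennreal_mult_less_top)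
      then show "(\<integral>\<^sup>+x. h1 x * ennreal (norm (f x)) \<partial>lborel) < \<infinity>" using i2 by (metis le_less_trans)
    qed (use True in simp_all)
  qed
qed

lemma lower_real:
  fixes x z :: "'a::real_normed_vector" and R D s :: real
  assumes R: "R \<ge> 1" and z: "norm z \<le> R" and zx: "z \<noteq> x" and D: "D \<ge> 1" and s: "s > 0"
  shows "2 * R powr (1 - D) * (2 * R) powr (- 1 - 2 * s) * (1 + norm x) powr (- D - 2 * s)
     \<le> 2 * norm (z - x) powr (1 - D) * (1 + norm (z - x)) powr (- 1 - 2 * s)"
proof -
  define a where "a = norm (z - x)"
  define X where "X = 1 + norm x"
  have a0: "a > 0" using zx by (simp add: a_def)
  have X1: "X \<ge> 1" by (simp add: X_def)
  have "a \<le> norm z + norm x" unfolding a_def by (rule norm_triangle_ineq4)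
  also have "\<dots> \<le> R * X" using z R mult_right_mono[OF R norm_ge_zero[of x]] by (simp add: X_def algebra_simps)
  finally have aRX: "a \<le> R * X" .
  have "1 + a \<le> 2 * R * X"
  proof -
    have "1 \<le> R * X" using R X1 by (metis mult_mono' mult_1 zero_le_one order_trans)
    then show ?thesis using aRX by simp
  qed
  have p1: "(R * X) powr (1 - D) \<le> a powr (1 - D)"
    using a0 aRX D by (intro powr_mono2') auto
  have p2: "(2 * R * X) powr (- 1 - 2 * s) \<le> (1 + a) powr (- 1 - 2 * s)"
    using a0 \<open>1 + a \<le> 2 * R * X\<close> s by (intro powr_mono2') auto
  have "R powr (1 - D) * (2 * R) powr (- 1 - 2 * s) * X powr (- D - 2 * s)
      = (R * X) powr (1 - D) * (2 * R * X) powr (- 1 - 2 * s)"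
  proof -
    have "X powr (- D - 2 * s) = X powr (1 - D) * X powr (- 1 - 2 * s)"
      proof -
        have e: "1 - D + (- 1 - 2 * s) = - D - 2 * s" by simp
        show ?thesis by (metis e powr_add)
      qed
    then show ?thesis using R X1 by (simp add: powr_mult mult_ac)
  qed
  also have "\<dots> \<le> a powr (1 - D) * (1 + a) powr (- 1 - 2 * s)"
    by (rule mult_mono[OF p1 p2]) auto
  finally show ?thesis unfolding a_def X_def by simp
qed

lemma upper_real:
  fixes x z :: "'a::real_normed_vector" and R D s :: real
  assumes R: "R \<ge> 1" and z: "norm z \<le> R" and x: "norm x \<ge> 2 * R" and D: "D \<ge> 1" and s: "s > 0"
  shows "2 * norm (z - x) powr (1 - D) * (1 + norm (z - x)) powr (- 1 - 2 * s)
     \<le> 2 * 4 powr (D + 2 * s) * (1 + norm x) powr (- D - 2 * s)"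
proof -
  define a where "a = norm (z - x)"
  define q where "q = (1 + norm x) / 4"
  have "norm x - norm z \<le> a" unfolding a_def by (metis norm_minus_commute norm_triangle_ineq2)
  then have qa: "q \<le> a" using z x R by (simp add: q_def)
  have q0: "q > 0" by (simp add: q_def add_pos_nonneg)
  have p1: "a powr (1 - D) \<le> q powr (1 - D)"
    using q0 qa D by (intro powr_mono2') auto
  have p2: "(1 + a) powr (- 1 - 2 * s) \<le> q powr (- 1 - 2 * s)"
    using q0 qa s by (intro powr_mono2') auto
  have "a powr (1 - D) * (1 + a) powr (- 1 - 2 * s) \<le> q powr (1 - D) * q powr (- 1 - 2 * s)"
    by (rule mult_mono[OF p1 p2]) auto
  also have "\<dots> = q powr (- D - 2 * s)"
    proof -
        have e: "1 - D + (- 1 - 2 * s) = - D - 2 * s" by simp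
        show ?thesis by (metis e powr_add)
      qed
  also have "\<dots> = 4 powr (D + 2 * s) * (1 + norm x) powr (- D - 2 * s)"
  proof -
    have "q powr (- D - 2 * s) = (1 + norm x) powr (- D - 2 * s) / 4 powr (- D - 2 * s)"
      unfolding q_def by (rule powr_divide)
    also have "4 powr (- D - 2 * s) = inverse (4 powr (D + 2 * s))"
      by (simp add: powr_minus[symmetric])
    finally show ?thesis by (simp add: field_simps)
  qed
  finally show ?thesis unfolding a_def by simp
qed

lemma ssm_id[measurable]: "(\<lambda>\<theta>. \<theta>) \<in> (sphere_surface_measure :: 'a::euclidean_space measure) \<rightarrow>\<^sub>M borel"
proof -
  have "(\<lambda>\<theta>::'a. \<theta>) \<in> restrict_space borel (sphere 0 1) \<rightarrow>\<^sub>M borel"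
    by (rule measurable_restrict_space1) simp
  then show ?thesis by (subst measurable_cong_sets[OF sets_ssm refl])
qed

lemma ssm_finite: "emeasure (sphere_surface_measure :: 'a::euclidean_space measure) (space sphere_surface_measure) < \<infinity>"
proof -
  have "emeasure (sphere_surface_measure :: 'a measure) (space sphere_surface_measure) = (\<integral>\<^sup>+\<theta>. 1 \<partial>(sphere_surface_measure :: 'a measure))"
    by simp
  also have "\<dots> = of_nat DIM('a) * (\<integral>\<^sup>+y. indicator (ball (0::'a) 1 - {0}) y * 1 \<partial>lborel)"
    by (rule ssm_nn_integral) simp
  also have "\<dots> = of_nat DIM('a) * emeasure lborel (ball (0::'a) 1 - {0})"
    by simp
  also have "\<dots> \<le> of_nat DIM('a) * emeasure lborel (ball (0::'a) 1)"
    by (intro mult_left_mono emeasure_mono) auto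
  also have "\<dots> < \<infinity>" using emeasure_lborel_ball_finite[of "0::'a" 1] by (simp add: ennreal_mult_less_top ennreal_of_nat_eq_real_of_nat)
  finally show ?thesis .
qed

lemma nu_star_measurable:
  fixes \<Omega> :: "'a::euclidean_space set" and g :: "'a \<Rightarrow> real"
  assumes [measurable]: "\<Omega> \<in> sets borel"
    and gm: "g \<in> borel_measurable sphere_surface_measure"
    and gC: "\<And>\<theta>. \<theta> \<in> sphere 0 1 \<Longrightarrow> g \<theta> \<le> C"
    and M: "M = density sphere_surface_measure (\<lambda>\<theta>. ennreal (g \<theta>))"
  shows "nu_star \<Omega> s M \<in> borel_measurable borel"
proof -
  have "emeasure M (space M) = (\<integral>\<^sup>+\<theta>. ennreal (g \<theta>) \<partial>sphere_surface_measure)"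
    unfolding M using gm by (subst emeasure_density) auto
  also have "\<dots> \<le> (\<integral>\<^sup>+\<theta>. ennreal C \<partial>(sphere_surface_measure :: 'a measure))"
    by (rule nn_integral_mono) (use gC in \<open>auto intro!: ennreal_leI simp: space_ssm\<close>)
  also have "\<dots> < \<infinity>" using ssm_finite[where 'a='a] by (simp add: ennreal_mult_less_top)
  finally have "emeasure M (space M) \<noteq> \<infinity>" by simp
  then interpret finite_measure M by (rule finite_measureI)
  have [measurable]: "(\<lambda>\<theta>. \<theta>) \<in> M \<rightarrow>\<^sub>M borel"
    unfolding M by (subst measurable_cong_sets[OF sets_density refl]) simp
  have "(\<lambda>p. \<integral>\<^sup>+\<theta>. indicator \<Omega> (fst p + snd p *\<^sub>R \<theta>) * ennreal ((1 + \<bar>snd p\<bar>) powr (- 1 - 2 * s)) \<partial>M)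
     \<in> borel_measurable ((lborel :: 'a measure) \<Otimes>\<^sub>M (lborel :: real measure))"
    by measurable
  then have "(\<lambda>x. \<integral>\<^sup>+r. \<integral>\<^sup>+\<theta>. indicator \<Omega> (x + r *\<^sub>R \<theta>) * ennreal ((1 + \<bar>r\<bar>) powr (- 1 - 2 * s)) \<partial>M \<partial>lborel)
     \<in> borel_measurable (lborel :: 'a measure)"
    by measurable
  then show ?thesis unfolding nu_star_def[abs_def] by simp
qed

theorem lemmaA1:
  fixes s :: real and \<Omega> :: "'a::euclidean_space set" and M :: "'a measure"
    and g :: "'a \<Rightarrow> real" and c C :: real
  assumes "0 < s" "s < 1"
    and "open \<Omega>" "bounded \<Omega>" "\<Omega> \<noteq> {}"
    and "g \<in> borel_measurable sphere_surface_measure"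
    and "0 < c" "\<And>\<theta>. \<theta> \<in> sphere 0 1 \<Longrightarrow> c \<le> g \<theta> \<and> g \<theta> \<le> C"
    and "M = density sphere_surface_measure (\<lambda>\<theta>. ennreal (g \<theta>))"
  shows "\<forall>f :: 'a \<Rightarrow> real.
           integrable (density lborel (nu_star \<Omega> s M)) f \<longleftrightarrow>
           integrable (density lborel (\<lambda>x. ennreal ((1 + norm x) powr (- real DIM('a) - 2 * s)))) f"
proof
  fix f :: "'a \<Rightarrow> real"
  note s0 = assms(1) and Oopen = assms(3) and Obd = assms(4) and One = assms(5)
    and gm = assms(6) and c0 = assms(7) and gb = assms(8) and Mdef = assms(9)
  have Om[measurable]: "\<Omega> \<in> sets borel" using Oopen by simp
  define D where "D = real DIM('a)"
  have D1: "D \<ge> 1" unfolding D_def by (simp add: DIM_positive Suc_le_eq)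
  define W where "W = (\<lambda>r::real. (1 + \<bar>r\<bar>) powr (- 1 - 2 * s))"
  have Wm[measurable]: "W \<in> borel_measurable borel" unfolding W_def by measurable
  have W0: "\<And>r. 0 \<le> W r" unfolding W_def by simp
  define Wt where "Wt = (\<lambda>x::'a. (1 + norm x) powr (- D - 2 * s))"
  have Wtm[measurable]: "Wt \<in> borel_measurable borel" unfolding Wt_def by measurable
  define \<Phi> where "\<Phi> = (\<lambda>x::'a. \<integral>\<^sup>+r. \<integral>\<^sup>+\<theta>. indicator \<Omega> (x + r *\<^sub>R \<theta>) * ennreal (W \<bar>r\<bar>) \<partial>sphere_surface_measure \<partial>lborel)"
  define \<Psi> where "\<Psi> = (\<lambda>x::'a. \<integral>\<^sup>+z. ennreal (indicator \<Omega> z * (if z = x then 0 else 2 * norm (z - x) powr (1 - D) * W (norm (z - x)))) \<partial>lborel)"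
  have PhiPsi: "\<And>x. \<Phi> x = \<Psi> x"
    unfolding \<Phi>_def \<Psi>_def D_def by (rule Phi_formula[OF Wm W0 Om])
  have nu_m: "nu_star \<Omega> s M \<in> borel_measurable borel"
    by (rule nu_star_measurable[OF Om gm _ Mdef]) (use gb in blast)
  have nu_bounds: "\<And>x. ennreal c * \<Phi> x \<le> nu_star \<Omega> s M x \<and> nu_star \<Omega> s M x \<le> ennreal C * \<Phi> x"
  proof -
    fix x :: 'a
    interpret S: finite_measure "sphere_surface_measure :: 'a measure"
      using ssm_finite[where 'a='a] by (intro finite_measureI) simp
    have gm'[measurable]: "(\<lambda>\<theta>. ennreal (g \<theta>)) \<in> borel_measurable sphere_surface_measure"
      using gm by measurable
    define F where "F = (\<lambda>r (\<theta>::'a). indicator \<Omega> (x + r *\<^sub>R \<theta>) * ennreal ((1 + \<bar>r\<bar>) powr (- 1 - 2 * s)))"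
    have Fm: "\<And>r. F r \<in> borel_measurable sphere_surface_measure" unfolding F_def by measurable
    have Im[measurable]: "(\<lambda>r. \<integral>\<^sup>+\<theta>. F r \<theta> \<partial>sphere_surface_measure) \<in> borel_measurable lborel"
      unfolding F_def by measurable
    have Phi_eq: "\<Phi> x = (\<integral>\<^sup>+r. \<integral>\<^sup>+\<theta>. F r \<theta> \<partial>sphere_surface_measure \<partial>lborel)"
      unfolding \<Phi>_def F_def W_def by simp
    have nu_eq: "nu_star \<Omega> s M x = (\<integral>\<^sup>+r. \<integral>\<^sup>+\<theta>. ennreal (g \<theta>) * F r \<theta> \<partial>sphere_surface_measure \<partial>lborel)"
    proof -
      have "nu_star \<Omega> s M x = (\<integral>\<^sup>+r. \<integral>\<^sup>+\<theta>. F r \<theta> \<partial>density sphere_surface_measure (\<lambda>\<theta>. ennreal (g \<theta>)) \<partial>lborel)"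
        unfolding nu_star_def Mdef F_def by simp
      also have "\<dots> = (\<integral>\<^sup>+r. \<integral>\<^sup>+\<theta>. ennreal (g \<theta>) * F r \<theta> \<partial>sphere_surface_measure \<partial>lborel)"
        by (intro nn_integral_cong nn_integral_density gm' Fm)
      finally show ?thesis .
    qed
    have lo: "\<And>r. ennreal c * (\<integral>\<^sup>+\<theta>. F r \<theta> \<partial>sphere_surface_measure) \<le> (\<integral>\<^sup>+\<theta>. ennreal (g \<theta>) * F r \<theta> \<partial>sphere_surface_measure)"
      apply (subst nn_integral_cmult[symmetric, OF Fm])
      apply (rule nn_integral_mono)
      using gb by (auto simp: space_ssm intro!: mult_right_mono ennreal_leI)
    have up: "\<And>r. (\<integral>\<^sup>+\<theta>. ennreal (g \<theta>) * F r \<theta> \<partial>sphere_surface_measure) \<le> ennreal C * (\<integral>\<^sup>+\<theta>. F r \<theta> \<partial>sphere_surface_measure)"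
      apply (subst nn_integral_cmult[symmetric, OF Fm])
      apply (rule nn_integral_mono)
      using gb by (auto simp: space_ssm intro!: mult_right_mono ennreal_leI)
    have "ennreal c * \<Phi> x = (\<integral>\<^sup>+r. ennreal c * (\<integral>\<^sup>+\<theta>. F r \<theta> \<partial>sphere_surface_measure) \<partial>lborel)"
      unfolding Phi_eq by (rule nn_integral_cmult[symmetric, OF Im])
    also have "\<dots> \<le> nu_star \<Omega> s M x" unfolding nu_eq by (rule nn_integral_mono) (rule lo)
    finally have 1: "ennreal c * \<Phi> x \<le> nu_star \<Omega> s M x" .
    have "nu_star \<Omega> s M x \<le> (\<integral>\<^sup>+r. ennreal C * (\<integral>\<^sup>+\<theta>. F r \<theta> \<partial>sphere_surface_measure) \<partial>lborel)"
      unfolding nu_eq by (rule nn_integral_mono) (rule up)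
    also have "\<dots> = ennreal C * \<Phi> x"
      unfolding Phi_eq by (rule nn_integral_cmult[OF Im])
    finally show "ennreal c * \<Phi> x \<le> nu_star \<Omega> s M x \<and> nu_star \<Omega> s M x \<le> ennreal C * \<Phi> x" using 1 by simp
  qed
  obtain Bd where Bd: "\<And>x. \<Phi> x \<le> ennreal Bd" "Bd \<ge> 0"
  proof -
    let ?S = "emeasure (sphere_surface_measure :: 'a measure) (space sphere_surface_measure)"
    have Wle: "\<And>r. ennreal (W \<bar>r\<bar>) \<le> ennreal (indicator {-1..1} r) + ennreal (if 1 < \<bar>r\<bar> then \<bar>r\<bar> powr (- 1 - 2 * s) else 0)"
    proof -
      fix r :: real
      show "ennreal (W \<bar>r\<bar>) \<le> ennreal (indicator {-1..1} r) + ennreal (if 1 < \<bar>r\<bar> then \<bar>r\<bar> powr (- 1 - 2 * s) else 0)"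
      proof (cases "1 < \<bar>r\<bar>")
        case True
        have "W \<bar>r\<bar> \<le> \<bar>r\<bar> powr (- 1 - 2 * s)" unfolding W_def
          using True s0 by (intro powr_mono2') auto
        moreover have "indicator {-1..1} r = (0::real)" using True by (auto simp: indicator_def)
        ultimately show ?thesis using True by (simp add: ennreal_leI)
      next
        case False
        have "W \<bar>r\<bar> \<le> 1 powr (- 1 - 2 * s)" unfolding W_def
          using s0 by (intro powr_mono2') auto
        moreover have "indicator {-1..1} r = (1::real)" using False by (auto simp: indicator_def)
        ultimately show ?thesis using False by (simp add: ennreal_leI)
      qed
    qed
    have "(\<integral>\<^sup>+r. ennreal (W \<bar>r\<bar>) \<partial>lborel) \<le> (\<integral>\<^sup>+r. ennreal (indicator {-1..1} r) + ennreal (if 1 < \<bar>r\<bar> then \<bar>r\<bar> powr (- 1 - 2 * s) else 0) \<partial>lborel)"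
      by (rule nn_integral_mono) (rule Wle)
    also have "\<dots> = (\<integral>\<^sup>+r. ennreal (indicator {-1..1::real} r) \<partial>lborel) + (\<integral>\<^sup>+r. ennreal (if 1 < \<bar>r\<bar> then \<bar>r\<bar> powr (- 1 - 2 * s) else 0) \<partial>lborel)"
      by (intro nn_integral_add) auto
    also have "\<dots> < \<infinity>"
    proof -
      have "(\<integral>\<^sup>+r. ennreal (indicator {-1..1::real} r) \<partial>lborel) = 2"
        by (simp only: ennreal_indicator nn_integral_indicator sets_lborel atLeastAtMost_borel emeasure_lborel_Icc) simp
      moreover have "(\<integral>\<^sup>+r. ennreal (if 1 < \<bar>r\<bar> then \<bar>r\<bar> powr (- 1 - 2 * s) else 0) \<partial>lborel) = ennreal (2 * (- (1 powr (- 1 - 2 * s + 1)) / (- 1 - 2 * s + 1)))"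
        by (rule two_sided_nn) (use s0 in auto)
      ultimately show ?thesis by simp
    qed
    finally have Wfin: "(\<integral>\<^sup>+r. ennreal (W \<bar>r\<bar>) \<partial>lborel) < \<infinity>" .
    define B where "B = (\<integral>\<^sup>+r. ennreal (W \<bar>r\<bar>) \<partial>lborel) * ?S"
    have Bfin: "B < \<infinity>" unfolding B_def using Wfin ssm_finite[where 'a='a] by (simp add: ennreal_mult_less_top)
    have "\<And>x. \<Phi> x \<le> B"
    proof -
      fix x
      have "\<Phi> x \<le> (\<integral>\<^sup>+r. \<integral>\<^sup>+\<theta>. ennreal (W \<bar>r\<bar>) \<partial>(sphere_surface_measure :: 'a measure) \<partial>lborel)"
        unfolding \<Phi>_def
        by (intro nn_integral_mono) (auto simp: indicator_def)
      also have "\<dots> = (\<integral>\<^sup>+r. ennreal (W \<bar>r\<bar>) * ?S \<partial>lborel)" by simp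
      also have "\<dots> = B" unfolding B_def by (rule nn_integral_multc) simp
      finally show "\<Phi> x \<le> B" .
    qed
    then show ?thesis using Bfin
      by (intro that[of "enn2real B"]) (auto simp: ennreal_enn2real_if)
  qed
  obtain R where R: "R \<ge> 1" "\<And>z. z \<in> \<Omega> \<Longrightarrow> norm z \<le> R"
  proof -
    obtain R0 where "\<And>z. z \<in> \<Omega> \<Longrightarrow> norm z \<le> R0" using Obd bounded_iff by blast
    then show ?thesis by (intro that[of "max R0 1"]) (auto intro: order_trans[OF _ max.cobounded1])
  qed
  have Ofin: "emeasure lborel \<Omega> < \<infinity>" using Obd by (rule emeasure_bounded_finite)
  have Opos: "emeasure lborel \<Omega> > 0"
  proof -
    obtain y where y: "y \<in> \<Omega>" using One by blast
    obtain e where e: "e > 0" "ball y e \<subseteq> \<Omega>" using Oopen y open_contains_ball by blast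
    have "emeasure lborel (ball y e) = ennreal (measure lborel (ball y e))"
      using emeasure_lborel_ball_finite[of y e] by (intro emeasure_eq_ennreal_measure) simp
    moreover have "measure lborel (ball y e) > 0" using content_ball_pos[OF e(1)] by simp
    ultimately have "emeasure lborel (ball y e) > 0" by simp
    also have "emeasure lborel (ball y e) \<le> emeasure lborel \<Omega>" using e by (intro emeasure_mono) auto
    finally show ?thesis .
  qed
  define mO where "mO = measure lborel \<Omega>"
  have mO1: "emeasure lborel \<Omega> = ennreal mO" using Ofin
    unfolding mO_def by (intro emeasure_eq_ennreal_measure) simp
  have mO2: "mO > 0" using Opos mO1 by (simp add: mO_def measure_nonneg)
  note mO = mO1 mO2
  define K0 where "K0 = 2 * R powr (1 - D) * (2 * R) powr (- 1 - 2 * s) * mO"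
  have K0: "K0 > 0" using R mO unfolding K0_def by (intro mult_pos_pos) auto
  define \<kappa> where "\<kappa> = 2 * R powr (1 - D) * (2 * R) powr (- 1 - 2 * s)"
  have Psi_lo: "\<And>x. ennreal (K0 * Wt x) \<le> \<Psi> x"
  proof -
    fix x :: 'a
    have "(\<integral>\<^sup>+z. ennreal (\<kappa> * Wt x) * indicator \<Omega> z \<partial>lborel) \<le> \<Psi> x"
      unfolding \<Psi>_def
    proof (rule nn_integral_mono_AE)
      show "AE z in lborel. ennreal (\<kappa> * Wt x) * indicator \<Omega> z \<le> ennreal (indicator \<Omega> z * (if z = x then 0 else 2 * norm (z - x) powr (1 - D) * W (norm (z - x))))"
        using AE_lborel_singleton[of x]
      proof (rule AE_mp, intro AE_I2 impI)
        fix z assume zx: "z \<noteq> x"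
        show "ennreal (\<kappa> * Wt x) * indicator \<Omega> z \<le> ennreal (indicator \<Omega> z * (if z = x then 0 else 2 * norm (z - x) powr (1 - D) * W (norm (z - x))))"
        proof (cases "z \<in> \<Omega>")
          case True
          have "\<kappa> * Wt x \<le> 2 * norm (z - x) powr (1 - D) * W (norm (z - x))"
            using lower_real[OF R(1) R(2)[OF True] zx D1 s0] unfolding \<kappa>_def Wt_def W_def by simp
          then show ?thesis using True zx by (simp add: ennreal_leI)
        qed simp
      qed
    qed
    also have "(\<integral>\<^sup>+z. ennreal (\<kappa> * Wt x) * indicator \<Omega> z \<partial>lborel) = ennreal (\<kappa> * Wt x) * emeasure lborel \<Omega>"
      by (rule nn_integral_cmult_indicator) simp
    finally show "ennreal (K0 * Wt x) \<le> \<Psi> x"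
      using mO R unfolding K0_def \<kappa>_def Wt_def by (simp add: ennreal_mult'[symmetric] mult_ac)
  qed
  define K1 where "K1 = 2 * 4 powr (D + 2 * s) * mO"
  have Psi_up: "\<And>x. norm x \<ge> 2 * R \<Longrightarrow> \<Psi> x \<le> ennreal (K1 * Wt x)"
  proof -
    fix x :: 'a assume x: "norm x \<ge> 2 * R"
    have "\<Psi> x \<le> (\<integral>\<^sup>+z. ennreal (2 * 4 powr (D + 2 * s) * Wt x) * indicator \<Omega> z \<partial>lborel)"
      unfolding \<Psi>_def
    proof (rule nn_integral_mono)
      fix z :: 'a
      show "ennreal (indicator \<Omega> z * (if z = x then 0 else 2 * norm (z - x) powr (1 - D) * W (norm (z - x)))) \<le> ennreal (2 * 4 powr (D + 2 * s) * Wt x) * indicator \<Omega> z"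
      proof (cases "z \<in> \<Omega>")
        case True
        have "2 * norm (z - x) powr (1 - D) * W (norm (z - x)) \<le> 2 * 4 powr (D + 2 * s) * Wt x"
          using upper_real[OF R(1) R(2)[OF True] x D1 s0] unfolding Wt_def W_def by simp
        then show ?thesis using True by (auto simp: ennreal_leI)
      qed simp
    qed
    also have "\<dots> = ennreal (2 * 4 powr (D + 2 * s) * Wt x) * emeasure lborel \<Omega>"
      by (rule nn_integral_cmult_indicator) simp
    finally show "\<Psi> x \<le> ennreal (K1 * Wt x)"
      using mO unfolding K1_def Wt_def by (simp add: ennreal_mult'[symmetric] mult_ac)
  qed
  define K2 where "K2 = K1 + Bd * (1 + 2 * R) powr (D + 2 * s)"
  have Wt0: "\<And>x. Wt x \<ge> 0" unfolding Wt_def by simp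
  have K1_0: "K1 \<ge> 0" unfolding K1_def using mO by simp
  have Phi_up: "\<And>x. \<Phi> x \<le> ennreal (K2 * Wt x)"
  proof -
    fix x :: 'a
    show "\<Phi> x \<le> ennreal (K2 * Wt x)"
    proof (cases "norm x \<ge> 2 * R")
      case True
      have "K1 * Wt x \<le> K2 * Wt x" unfolding K2_def using Bd(2) Wt0[of x]
        by (intro mult_right_mono) auto
      then show ?thesis using PhiPsi[of x] Psi_up[OF True] by (metis ennreal_leI order_trans)
    next
      case False
      have "1 \<le> (1 + 2 * R) powr (D + 2 * s) * Wt x"
      proof -
        have "(1 + 2 * R) powr (- D - 2 * s) \<le> Wt x" unfolding Wt_def
          using False s0 D1 norm_ge_zero[of x] by (intro powr_mono2') (auto simp: add_pos_nonneg)
        moreover have "(1 + 2 * R) powr (D + 2 * s) * (1 + 2 * R) powr (- D - 2 * s) = 1"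
          using R by (simp add: powr_add[symmetric])
        moreover have "(1 + 2 * R) powr (D + 2 * s) \<ge> 0" by simp
        ultimately show ?thesis by (metis mult_left_mono)
      qed
      then have "Bd \<le> Bd * (1 + 2 * R) powr (D + 2 * s) * Wt x"
        using Bd(2) by (metis mult.assoc mult_left_mono mult.right_neutral)
      also have "\<dots> \<le> K2 * Wt x" unfolding K2_def using K1_0 Wt0[of x]
        by (simp add: distrib_right)
      finally show ?thesis using Bd(1)[of x] by (metis ennreal_leI order_trans)
    qed
  qed
  have "integrable (density lborel (nu_star \<Omega> s M)) f \<longleftrightarrow> integrable (density lborel (\<lambda>x. ennreal (Wt x))) f"
  proof (rule integrable_density_equiv[OF nu_m _ _ _ ])
    show "(\<lambda>x. ennreal (Wt x)) \<in> borel_measurable borel" by measurable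
    show "ennreal c * ennreal K0 > 0" using c0 K0 by (simp add: ennreal_mult[symmetric])
    show "ennreal C * ennreal K2 < \<infinity>" by (simp add: ennreal_mult_less_top)
    fix x
    show "ennreal c * ennreal K0 * ennreal (Wt x) \<le> nu_star \<Omega> s M x"
    proof -
      have "ennreal c * ennreal K0 * ennreal (Wt x) = ennreal c * ennreal (K0 * Wt x)"
        using K0 by (simp add: ennreal_mult mult.assoc Wt_def)
      also have "\<dots> \<le> ennreal c * \<Phi> x" using Psi_lo[of x] PhiPsi[of x] by (simp add: mult_left_mono)
      also have "\<dots> \<le> nu_star \<Omega> s M x" using nu_bounds by blast
      finally show ?thesis .
    qed
    show "nu_star \<Omega> s M x \<le> ennreal C * ennreal K2 * ennreal (Wt x)"
    proof -
      have "nu_star \<Omega> s M x \<le> ennreal C * \<Phi> x" using nu_bounds by blast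
      also have "\<dots> \<le> ennreal C * ennreal (K2 * Wt x)" using Phi_up[of x] by (simp add: mult_left_mono)
      also have "\<dots> \<le> ennreal C * ennreal K2 * ennreal (Wt x)"
        by (simp add: ennreal_mult' mult.assoc Wt_def ennreal_mult'' ennreal_mult_le_mult_iff) 
      finally show ?thesis .
    qed
  qed
  then show "integrable (density lborel (nu_star \<Omega> s M)) f \<longleftrightarrow>
           integrable (density lborel (\<lambda>x. ennreal ((1 + norm x) powr (- real DIM('a) - 2 * s)))) f"
    by (simp add: Wt_def D_def)
qed

end
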